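(* In the proposed quantized Grassmannian feedback scheme with a sphere-packing codebook (satisfying $\max_F d_c(\hat F,F)\le \Delta(1+o(2^{-N_f/N_G}))$), choosing the number of feedback bits per receiver as $$N_f=N((K-1)M-N)\log_2 P$$ keeps the interference leakage power $L_i$ of every receiver bounded by a constant independent of $P$ as $P\to\infty$.
   Context: System model: $K$ transmitter–receiver pairs, $M$ transmit and $N$ receive antennas per node, $(K-1)M\ge N$; generic channels $H_{ij}\in\mathbb{C}^{N\times M}$; truncated unitary precoders $V_j\in\mathbb{C}^{M\times d}$; inputs $x_j$ with $\mathbb{E}[x_jx_j^H]=\frac{P}{d}I_d$; $y_i=H_{ii}V_ix_i+\sum_{j\ne i}H_{ij}V_jx_j+n_i$, $n_i\sim\mathcal{CN}(0,I_N)$. $H_i=[H_{i1},\dots,H_{i,i-1},H_{i,i+1},\dots,H_{iK}]$, $V_{-i}=\mathrm{Bdiag}(V_1,\dots,V_{i-1},V_{i+1},\dots,V_K)$. Scheme: economy QR $H_i^H=F_iC_i$ ($F_i$ truncated unitary $(K-1)M\times N$, $C_i$ invertible); codebook $\mathcal S$ of $2^{N_f}$ truncated unitary $(K-1)M\times N$ matrices; $\hat F_i=\arg\min_{S\in\mathcal S}d_c(S,F_i)$ with $d_c(X,Y)=\frac1{\sqrt2}\|XX^H-YY^H\|_F$; truncated unitary $V_j$, $\tilde U_i\in\mathbb{C}^{N\times d}$ with $\tilde U_i^H\hat F_i^HV_{-i}=0$; receive filter $G_i^H$, $G_i=C_i^{-1}F_i^H\hat F_i\tilde U_i$; leakage $e_i=\sum_{j\ne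 i}G_i^HH_{ij}V_jx_j$, $L_i=\mathrm{tr}\,\mathbb{E}[e_ie_i^H]$. $N_G=2N((K-1)M-N)$, $\Delta=2/(c\,2^{N_f})^{1/N_G}$ with $c$ a positive constant depending only on $K,M,N$. *)

theory Defs
  imports "Jordan_Normal_Form.Schur_Decomposition" "HOL-Library.Landau_Symbols"
begin

abbreviation herm :: "complex mat \<Rightarrow> complex mat" where
  "herm A \<equiv> mat_adjoint A"

definition trunc_unitary :: "complex mat \<Rightarrow> nat \<Rightarrow> nat \<Rightarrow> bool" where
  "trunc_unitary X m n \<longleftrightarrow> X \<in> carrier_mat m n \<and> herm X * X = 1\<^sub>m n"

definition frob_norm :: "complex mat \<Rightarrow> real" where
  "frob_norm A = sqrt (\<Sum>r<dim_row A. \<Sum>c<dim_col A. (cmod (A $$ (r, c)))\<^sup>2)"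

definition chordal_dist :: "complex mat \<Rightarrow> complex mat \<Rightarrow> real" where
  "chordal_dist X Y = frob_norm (X * herm X - Y * herm Y) / sqrt 2"

definition trace_mat :: "complex mat \<Rightarrow> complex" where
  "trace_mat A = (\<Sum>r<dim_row A. A $$ (r, r))"

fun hcat :: "nat \<Rightarrow> complex mat list \<Rightarrow> complex mat" where
  "hcat n [] = 0\<^sub>m n 0"
| "hcat n (A # As) = (let B = hcat n As in
     four_block_mat A B (0\<^sub>m 0 (dim_col A)) (0\<^sub>m 0 (dim_col B)))"

definition others :: "nat \<Rightarrow> nat \<Rightarrow> nat list" where
  "others K i = filter (\<lambda>j. j \<noteq> i) [0..<K]"

definition H_stack :: "nat \<Rightarrow> nat \<Rightarrow> (nat \<Rightarrow> nat \<Rightarrow> complex mat) \<Rightarrow> nat \<Rightarrow> complex mat" where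
  "H_stack K N H i = hcat N (map (\<lambda>j. H i j) (others K i))"

definition V_minus :: "nat \<Rightarrow> (nat \<Rightarrow> complex mat) \<Rightarrow> nat \<Rightarrow> complex mat" where
  "V_minus K V i = diag_block_mat (map V (others K i))"

definition N_G :: "nat \<Rightarrow> nat \<Rightarrow> nat \<Rightarrow> nat" where
  "N_G K M N = 2 * N * ((K - 1) * M - N)"

definition Delta :: "nat \<Rightarrow> nat \<Rightarrow> nat \<Rightarrow> real \<Rightarrow> nat \<Rightarrow> real" where
  "Delta K M N c Nf = 2 / ((c * 2 ^ Nf) powr (1 / real (N_G K M N)))"

definition feedback_bits :: "nat \<Rightarrow> nat \<Rightarrow> nat \<Rightarrow> real \<Rightarrow> nat" where
  "feedback_bits K M N P = nat \<lceil>real (N * ((K - 1) * M - N)) * log 2 P\<rceil>"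

(* interference leakage L_i = tr E[e_i e_i^H], with independent inputs x_j,
   E[x_j x_j^H] = (P/d) I_d, e_i = \<Sum>_{j\<noteq>i} G_i^H H_ij V_j x_j *)
definition leakage :: "nat \<Rightarrow> nat \<Rightarrow> real \<Rightarrow> (nat \<Rightarrow> nat \<Rightarrow> complex mat)
    \<Rightarrow> (nat \<Rightarrow> complex mat) \<Rightarrow> complex mat \<Rightarrow> nat \<Rightarrow> complex" where
  "leakage K d P H V G i =
     (\<Sum>j\<leftarrow>others K i.
        trace_mat ((herm G * H i j * V j) * (complex_of_real (P / real d) \<cdot>\<^sub>m 1\<^sub>m d)
                   * herm (herm G * H i j * V j)))"

end

theory Submission
  imports Defs
begin


definition fsq :: "complex mat \<Rightarrow> real" where
  "fsq A = (\<Sum>r<dim_row A. \<Sum>c<dim_col A. (cmod (A $$ (r, c)))\<^sup>2)"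

lemma fsq_nonneg: "0 \<le> fsq A"
  unfolding fsq_def by (intro sum_nonneg) auto

lemma cs_real:
  fixes a b :: "'a \<Rightarrow> real"
  assumes "finite I"
  shows "(\<Sum>i\<in>I. a i * b i)\<^sup>2 \<le> (\<Sum>i\<in>I. (a i)\<^sup>2) * (\<Sum>i\<in>I. (b i)\<^sup>2)"
proof -
  have "0 \<le> (\<Sum>i\<in>I. \<Sum>j\<in>I. (a i * b j - a j * b i)\<^sup>2)"
    by (intro sum_nonneg) auto
  also have "\<dots> = (\<Sum>i\<in>I. \<Sum>j\<in>I. (a i)\<^sup>2 * (b j)\<^sup>2 + (a j)\<^sup>2 * (b i)\<^sup>2 - 2 * ((a i * b i) * (a j * b j)))"
    by (intro sum.cong refl) (simp add: power2_eq_square algebra_simps)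
  also have "\<dots> = (\<Sum>i\<in>I. \<Sum>j\<in>I. (a i)\<^sup>2 * (b j)\<^sup>2) + (\<Sum>i\<in>I. \<Sum>j\<in>I. (a j)\<^sup>2 * (b i)\<^sup>2)
      - 2 * (\<Sum>i\<in>I. \<Sum>j\<in>I. (a i * b i) * (a j * b j))"
    by (simp add: sum_subtractf sum.distrib sum_distrib_left)
  also have "(\<Sum>i\<in>I. \<Sum>j\<in>I. (a i)\<^sup>2 * (b j)\<^sup>2) = (\<Sum>i\<in>I. (a i)\<^sup>2) * (\<Sum>i\<in>I. (b i)\<^sup>2)"
    by (simp add: sum_product)
  also have "(\<Sum>i\<in>I. \<Sum>j\<in>I. (a j)\<^sup>2 * (b i)\<^sup>2) = (\<Sum>i\<in>I. (a i)\<^sup>2) * (\<Sum>i\<in>I. (b i)\<^sup>2)"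
  proof -
    have "(\<Sum>i\<in>I. (b i)\<^sup>2) * (\<Sum>i\<in>I. (a i)\<^sup>2) = (\<Sum>i\<in>I. \<Sum>j\<in>I. (a j)\<^sup>2 * (b i)\<^sup>2)"
      unfolding sum_product by (intro sum.cong refl) (simp add: mult.commute)
    thus ?thesis by (simp add: mult.commute)
  qed
  also have "(\<Sum>i\<in>I. \<Sum>j\<in>I. (a i * b i) * (a j * b j)) = (\<Sum>i\<in>I. a i * b i)\<^sup>2"
    by (simp add: sum_product power2_eq_square)
  finally show ?thesis by linarith
qed

lemma cs_cmod:
  fixes x y :: "'a \<Rightarrow> complex"
  assumes "finite I"
  shows "(cmod (\<Sum>i\<in>I. x i * y i))\<^sup>2 \<le> (\<Sum>i\<in>I. (cmod (x i))\<^sup>2) * (\<Sum>i\<in>I. (cmod (y i))\<^sup>2)"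
proof -
  have "cmod (\<Sum>i\<in>I. x i * y i) \<le> (\<Sum>i\<in>I. cmod (x i) * cmod (y i))"
    by (metis (no_types, lifting) norm_mult norm_sum sum.cong)
  hence "(cmod (\<Sum>i\<in>I. x i * y i))\<^sup>2 \<le> (\<Sum>i\<in>I. cmod (x i) * cmod (y i))\<^sup>2"
    by (intro power_mono) auto
  also have "\<dots> \<le> (\<Sum>i\<in>I. (cmod (x i))\<^sup>2) * (\<Sum>i\<in>I. (cmod (y i))\<^sup>2)" by (rule cs_real[OF assms])
  finally show ?thesis .
qed

lemma fsq_mult:
  assumes A: "A \<in> carrier_mat n m" and B: "B \<in> carrier_mat m k"
  shows "fsq (A * B) \<le> fsq A * fsq B"
proof -
  have "fsq (A * B) = (\<Sum>i<n. \<Sum>j<k. (cmod (\<Sum>l<m. A $$ (i,l) * B $$ (l,j)))\<^sup>2)"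
    unfolding fsq_def using A B
    by (intro sum.cong refl) (auto simp: scalar_prod_def lessThan_atLeast0)
  also have "\<dots> \<le> (\<Sum>i<n. \<Sum>j<k. (\<Sum>l<m. (cmod (A $$ (i,l)))\<^sup>2) * (\<Sum>l<m. (cmod (B $$ (l,j)))\<^sup>2))"
    by (intro sum_mono cs_cmod) auto
  also have "\<dots> = (\<Sum>i<n. \<Sum>l<m. (cmod (A $$ (i,l)))\<^sup>2) * (\<Sum>j<k. \<Sum>l<m. (cmod (B $$ (l,j)))\<^sup>2)"
    by (rule sum_product[symmetric])
  also have "\<dots> = fsq A * fsq B"
  proof -
    have "fsq B = (\<Sum>j<k. \<Sum>l<m. (cmod (B $$ (l,j)))\<^sup>2)"
      unfolding fsq_def using B by (simp add: sum.swap[of _ "{..<k}"])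
    moreover have "fsq A = (\<Sum>i<n. \<Sum>l<m. (cmod (A $$ (i,l)))\<^sup>2)"
      unfolding fsq_def using A by simp
    ultimately show ?thesis by (simp only:)
  qed
  finally show ?thesis .
qed

lemma herm_def': "herm A = mat (dim_col A) (dim_row A) (\<lambda>(i,j). cnj (A $$ (j,i)))"
  unfolding mat_adjoint_def by (rule eq_matI) (auto simp: mat_of_rows_def)

lemma herm_dims[simp]: "dim_row (herm A) = dim_col A" "dim_col (herm A) = dim_row A"
  by (simp_all add: herm_def')

lemma herm_index[simp]: "i < dim_col A \<Longrightarrow> j < dim_row A \<Longrightarrow> herm A $$ (i,j) = cnj (A $$ (j,i))"
  by (simp add: herm_def')

lemma herm_carrier[simp]: "A \<in> carrier_mat n m \<Longrightarrow> herm A \<in> carrier_mat m n"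
  by auto

lemma herm_herm[simp]: "herm (herm A) = A"
  by (rule eq_matI) auto

lemma herm_mult: assumes "A \<in> carrier_mat n m" "B \<in> carrier_mat m k"
  shows "herm (A * B) = herm B * herm A"
  using assms by (intro eq_matI) (auto simp: scalar_prod_def mult.commute)

lemma herm_one[simp]: "herm (1\<^sub>m n) = 1\<^sub>m n"
  by (rule eq_matI) auto

lemma fsq_herm[simp]: "fsq (herm A) = fsq A"
  unfolding fsq_def by (simp add: sum.swap[of _ "{..<dim_row A}"])

lemma re_cnj_mult: "Re (cnj z * z) = (cmod z)\<^sup>2"
  using cmod_power2[of z] by (simp add: power2_eq_square)

lemma fsq_as_trace: assumes "X \<in> carrier_mat n k"
  shows "fsq X = (\<Sum>c<k. Re ((herm X * X) $$ (c,c)))"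
proof -
  have "fsq X = (\<Sum>c<k. \<Sum>r<n. (cmod (X $$ (r,c)))\<^sup>2)"
    unfolding fsq_def using assms by (simp add: sum.swap[of _ "{..<k}"])
  also have "\<dots> = (\<Sum>c<k. Re ((herm X * X) $$ (c,c)))"
  proof (intro sum.cong refl)
    fix c assume c: "c \<in> {..<k}"
    have "(herm X * X) $$ (c,c) = (\<Sum>r<n. cnj (X$$(r,c)) * X$$(r,c))"
      using assms c by (simp add: scalar_prod_def lessThan_atLeast0)
    thus "(\<Sum>r<n. (cmod (X $$ (r,c)))\<^sup>2) = Re ((herm X * X) $$ (c,c))"
      by (simp only: Re_sum re_cnj_mult)
  qed
  finally show ?thesis .
qed

lemma fsq_unitary: assumes "trunc_unitary X n k" shows "fsq X = real k"
proof -
  have X: "X \<in> carrier_mat n k" and XX: "herm X * X = 1\<^sub>m k" using assms unfolding trunc_unitary_def by auto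
  show ?thesis by (simp add: fsq_as_trace[OF X] XX)
qed

lemma fsq_zero_rows: "dim_row A = 0 \<Longrightarrow> fsq A = 0"
  by (simp add: fsq_def)

lemma sum_split_add: "(\<Sum>i<a+b. (f::nat\<Rightarrow>real) i) = (\<Sum>i<a. f i) + (\<Sum>i<b. (f (a + i)::real))"
proof -
  have "(\<Sum>i<a+b. f i) = (\<Sum>i<a. f i) + (\<Sum>i\<in>{a..<a+b}. f i)"
    using sum.atLeastLessThan_concat[of 0 a "a+b" f] by (simp add: lessThan_atLeast0)
  also have "(\<Sum>i\<in>{a..<a+b}. f i) = (\<Sum>i<b. f (a + i))"
    using sum.shift_bounds_nat_ivl[of f 0 a b] by (simp add: lessThan_atLeast0 add.commute)
  finally show ?thesis .
qed

lemma fsq_four_block: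
  assumes "A \<in> carrier_mat r1 c1" "B \<in> carrier_mat r1 c2" "C \<in> carrier_mat r2 c1" "D \<in> carrier_mat r2 c2"
  shows "fsq (four_block_mat A B C D) = fsq A + fsq B + fsq C + fsq D"
  using assms unfolding fsq_def
  by (simp add: sum_split_add sum.distrib)

lemma trace_lemma: assumes "A \<in> carrier_mat r k"
  shows "Re (trace_mat (A * (complex_of_real s \<cdot>\<^sub>m 1\<^sub>m k) * herm A)) = s * fsq A"
proof -
  have "A * (complex_of_real s \<cdot>\<^sub>m 1\<^sub>m k) = complex_of_real s \<cdot>\<^sub>m A"
    using assms by (metis mult_smult_distrib right_mult_one_mat one_carrier_mat)
  moreover have "(complex_of_real s \<cdot>\<^sub>m A) * herm A = complex_of_real s \<cdot>\<^sub>m (A * herm A)"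
    using assms by (metis herm_carrier mult_smult_assoc_mat)
  ultimately have "Re (trace_mat (A * (complex_of_real s \<cdot>\<^sub>m 1\<^sub>m k) * herm A))
     = (\<Sum>i<r. s * Re ((A * herm A) $$ (i,i)))"
    using assms by (simp add: trace_mat_def Re_sum)
  also have "\<dots> = s * fsq (herm A)"
    using fsq_as_trace[of "herm A" k r] assms by (simp add: sum_distrib_left)
  finally show ?thesis by simp
qed

lemma fsq_zero[simp]: "fsq (0\<^sub>m a b) = 0"
  by (simp add: fsq_def)

lemma hcat_carrier: "(\<forall>A\<in>set As. dim_row A = n) \<Longrightarrow> hcat n As \<in> carrier_mat n (sum_list (map dim_col As))"
  by (induction As) (auto simp: Let_def)

lemma mult_hcat:
  assumes "X \<in> carrier_mat r n" "\<forall>A\<in>set As. dim_row A = n"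
  shows "X * hcat n As = hcat r (map ((*) X) As)"
  using assms(2)
proof (induction As)
  case Nil
  then show ?case using assms(1) by auto
next
  case (Cons A As)
  let ?B = "hcat n As"
  have B: "?B \<in> carrier_mat n (sum_list (map dim_col As))" using hcat_carrier Cons.prems by auto
  have B': "hcat r (map ((*) X) As) \<in> carrier_mat r (sum_list (map dim_col As))"
    using hcat_carrier[of "map ((*) X) As" r] assms(1) by (auto simp: o_def)
  have A: "dim_row A = n" using Cons.prems by auto
  have "X * four_block_mat A ?B (0\<^sub>m 0 (dim_col A)) (0\<^sub>m 0 (dim_col ?B))
      = four_block_mat (X * A) (X * ?B) (0\<^sub>m 0 (dim_col (X*A))) (0\<^sub>m 0 (dim_col (X * ?B)))"
    using assms(1) A B
    by (intro eq_matI) (auto simp: scalar_prod_def)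
  then show ?case using Cons by (simp add: Let_def)
qed

lemma fsq_diag_block: "fsq (diag_block_mat Vs) = sum_list (map fsq Vs)"
proof (induction Vs)
  case Nil then show ?case by simp
next
  case (Cons V Vs)
  let ?D = "diag_block_mat Vs"
  have "fsq (diag_block_mat (V # Vs)) = fsq (four_block_mat V (0\<^sub>m (dim_row V) (dim_col ?D)) (0\<^sub>m (dim_row ?D) (dim_col V)) ?D)"
    by (simp add: Let_def)
  also have "\<dots> = fsq V + fsq ?D"
    by (subst fsq_four_block[of V "dim_row V" "dim_col V" _ "dim_col ?D" _ "dim_row ?D"]) auto
  finally show ?case using Cons by simp
qed

lemma fsq_hcat_diag:
  assumes "length Ys = length Vs" "\<forall>k<length Ys. Ys ! k \<in> carrier_mat r (dim_row (Vs ! k))"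
  shows "fsq (hcat r Ys * diag_block_mat Vs) = sum_list (map (\<lambda>(Y,V). fsq (Y * V)) (zip Ys Vs))"
  using assms
proof (induction Ys Vs rule: list_induct2)
  case Nil
  then show ?case by (simp add: fsq_def)
next
  case (Cons Y Ys V Vs)
  let ?B = "hcat r Ys" and ?D = "diag_block_mat Vs"
  have Y: "Y \<in> carrier_mat r (dim_row V)" using Cons.prems by force
  have Ys: "\<forall>k<length Ys. Ys ! k \<in> carrier_mat r (dim_row (Vs ! k))" using Cons.prems by force
  have rows: "\<forall>A\<in>set Ys. dim_row A = r" using Ys by (metis carrier_matD(1) in_set_conv_nth)
  have "map dim_col Ys = map dim_row Vs"
    using Ys Cons.hyps by (intro nth_equalityI) auto
  hence B: "?B \<in> carrier_mat r (dim_row ?D)" using hcat_carrier[OF rows] by (simp add: dim_diag_block_mat)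
  have D: "?D \<in> carrier_mat (dim_row ?D) (dim_col ?D)" by auto
  have V: "V \<in> carrier_mat (dim_row V) (dim_col V)" by auto
  have "hcat r (Y # Ys) * diag_block_mat (V # Vs)
     = four_block_mat Y ?B (0\<^sub>m 0 (dim_row V)) (0\<^sub>m 0 (dim_row ?D))
       * four_block_mat V (0\<^sub>m (dim_row V) (dim_col ?D)) (0\<^sub>m (dim_row ?D) (dim_col V)) ?D"
    using Y B by (simp add: Let_def)
  also have "\<dots> = four_block_mat (Y * V + ?B * 0\<^sub>m (dim_row ?D) (dim_col V))
        (Y * 0\<^sub>m (dim_row V) (dim_col ?D) + ?B * ?D)
        (0\<^sub>m 0 (dim_row V) * V + 0\<^sub>m 0 (dim_row ?D) * 0\<^sub>m (dim_row ?D) (dim_col V))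
        (0\<^sub>m 0 (dim_row V) * 0\<^sub>m (dim_row V) (dim_col ?D) + 0\<^sub>m 0 (dim_row ?D) * ?D)"
    by (rule mult_four_block_mat[OF Y B _ _ V _ _ D]) auto
  also have "\<dots> = four_block_mat (Y * V) (?B * ?D) (0\<^sub>m 0 (dim_col V)) (0\<^sub>m 0 (dim_col ?D))"
    using Y B by (intro arg_cong4[where f=four_block_mat] eq_matI) auto
  finally have "fsq (hcat r (Y # Ys) * diag_block_mat (V # Vs)) = fsq (Y * V) + fsq (?B * ?D)"
    using Y B by (simp add: fsq_four_block[of _ r "dim_col V" _ "dim_col ?D" _ 0])
  then show ?case using Cons.IH[OF Ys] by simp
qed

lemma core_identity:
  assumes F: "F \<in> carrier_mat m N" and Fh: "Fh \<in> carrier_mat m N" and FhFh: "herm Fh * Fh = 1\<^sub>m N"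
    and U: "U \<in> carrier_mat N d"
    and C: "C \<in> carrier_mat N N" and Ci: "Cinv \<in> carrier_mat N N" and CCi: "C * Cinv = 1\<^sub>m N"
    and Hs: "herm Hs = F * C"
    and Vm: "Vm \<in> carrier_mat m q"
    and orth: "herm U * herm Fh * Vm = 0\<^sub>m d q"
  shows "herm (Cinv * herm F * Fh * U) * Hs * Vm = herm U * herm Fh * (F * herm F - Fh * herm Fh) * Vm"
proof -
  define a where "a = herm U"
  define b where "b = herm Fh"
  define f where "f = herm F"
  define ci where "ci = herm Cinv"
  define c where "c = herm C"
  have a: "a \<in> carrier_mat d N" and b: "b \<in> carrier_mat N m" and f: "f \<in> carrier_mat N m"
    and ci: "ci \<in> carrier_mat N N" and c: "c \<in> carrier_mat N N"
    using U Fh F Ci C by (auto simp: a_def b_def f_def ci_def c_def)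
  have cic: "ci * c = 1\<^sub>m N"
    using herm_mult[OF C Ci] CCi by (simp add: ci_def c_def)
  have HsE: "Hs = c * f"
    using arg_cong[OF Hs, of herm] herm_mult[OF F C] by (simp add: c_def f_def)
  have CF: "Cinv * herm F \<in> carrier_mat N m" using Ci F by auto
  have CFF: "Cinv * herm F * Fh \<in> carrier_mat N N" using CF Fh by auto
  have GE: "herm (Cinv * herm F * Fh * U) = a * (b * (F * ci))"
    using herm_mult[OF CFF U] herm_mult[OF CF Fh] herm_mult[OF Ci herm_carrier[OF F]]
    by (simp add: a_def b_def ci_def)
  have Fci: "F * ci \<in> carrier_mat m N" using F ci by auto
  have cf: "c * f \<in> carrier_mat N m" using c f by auto
  have e1: "(F * ci) * (c * f) = F * f"
  proof -
    have "(F * ci) * (c * f) = F * (ci * (c * f))" using assoc_mult_mat[OF F ci cf] .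
    also have "ci * (c * f) = (ci * c) * f" using assoc_mult_mat[OF ci c f] by simp
    also have "\<dots> = f" using cic f by simp
    finally show ?thesis .
  qed
  have bFci: "b * (F * ci) \<in> carrier_mat N N" using b Fci by auto
  have e2: "a * (b * (F * ci)) * (c * f) = (a * b) * (F * f)"
  proof -
    have "a * (b * (F * ci)) * (c * f) = a * ((b * (F * ci)) * (c * f))" using assoc_mult_mat[OF a bFci cf] .
    also have "(b * (F * ci)) * (c * f) = b * ((F * ci) * (c * f))" using assoc_mult_mat[OF b Fci cf] .
    also have "a * (b * ((F * ci) * (c * f))) = (a * b) * (F * f)"
      using e1 assoc_mult_mat[OF a b, of "F * f" m] F f by auto
    finally show ?thesis .
  qed
  have ab: "a * b \<in> carrier_mat d m" using a b by auto
  have Ff: "F * f \<in> carrier_mat m m" using F f by auto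
  have Fhb: "Fh * b \<in> carrier_mat m m" using Fh b by auto
  have e3: "(a * b) * (Fh * b) * Vm = 0\<^sub>m d q"
  proof -
    have "(a * b) * (Fh * b) = ((a * b) * Fh) * b" using assoc_mult_mat[OF ab Fh b] by simp
    also have "(a * b) * Fh = a * (b * Fh)" using assoc_mult_mat[OF a b Fh] .
    also have "\<dots> = a" using FhFh a by (simp add: b_def)
    finally show ?thesis using orth by (simp add: a_def b_def)
  qed
  have "herm U * herm Fh * (F * herm F - Fh * herm Fh) * Vm
      = ((a * b) * (F * f) - (a * b) * (Fh * b)) * Vm"
    using mult_minus_distrib_mat[OF ab Ff Fhb] by (simp add: a_def b_def f_def)
  also have "\<dots> = (a * b) * (F * f) * Vm - (a * b) * (Fh * b) * Vm"
    using ab Ff Fhb Vm by (intro minus_mult_distrib_mat[of _ d m]) auto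
  also have "\<dots> = (a * b) * (F * f) * Vm"
    using e3 ab Ff Vm by (intro eq_matI) auto
  finally show ?thesis using GE HsE e2 by simp
qed

lemma fsq_minus_swap: "A \<in> carrier_mat n k \<Longrightarrow> B \<in> carrier_mat n k \<Longrightarrow> fsq (A - B) = fsq (B - A)"
  unfolding fsq_def by (intro sum.cong refl) (auto simp: norm_minus_commute)

lemma chordal_sq: "(chordal_dist X Y)\<^sup>2 = fsq (X * herm X - Y * herm Y) / 2"
  unfolding chordal_dist_def frob_norm_def fsq_def[symmetric]
  by (simp add: power_divide fsq_nonneg)

lemma others_length: "i < K \<Longrightarrow> length (others K i) = K - 1"
proof -
  assume i: "i < K"
  have "length (others K i) = card ({x. x \<noteq> i} \<inter> set [0..<K])"
    unfolding others_def by (rule distinct_length_filter) simp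
  also have "{x. x \<noteq> i} \<inter> set [0..<K] = {0..<K} - {i}" by auto
  also have "card \<dots> = K - 1" using i by simp
  finally show ?thesis .
qed

lemma others_set: "set (others K i) = {j. j < K \<and> j \<noteq> i}"
  unfolding others_def by auto

lemma leak_bound:
  fixes K M N d :: nat and H :: "nat \<Rightarrow> nat \<Rightarrow> complex mat"
  assumes i: "i < K"
    and chan: "\<forall>i<K. \<forall>j<K. H i j \<in> carrier_mat N M"
    and F: "trunc_unitary F ((K - 1) * M) N"
    and C: "C \<in> carrier_mat N N" and Ci: "Cinv \<in> carrier_mat N N" and CCi: "C * Cinv = 1\<^sub>m N"
    and Hs: "herm (H_stack K N H i) = F * C"
    and Fh: "trunc_unitary Fh ((K - 1) * M) N"
    and V: "\<forall>j<K. trunc_unitary (V j) M d"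
    and U: "trunc_unitary U N d"
    and orth: "herm U * herm Fh * V_minus K V i = 0\<^sub>m d ((K - 1) * d)"
    and P: "P \<ge> 0"
  shows "Re (leakage K d P H V (Cinv * herm F * Fh * U) i)
     \<le> 2 * real N * real (K - 1) * real d * (P * (chordal_dist Fh F)\<^sup>2)"
proof -
  define m where "m = (K - 1) * M"
  define os where "os = others K i"
  define G where "G = Cinv * herm F * Fh * U"
  define X where "X = herm G"
  define Vm where "Vm = V_minus K V i"
  define D where "D = F * herm F - Fh * herm Fh"
  have len: "length os = K - 1" using others_length[OF i] by (simp add: os_def)
  have os_set: "\<And>j. j \<in> set os \<Longrightarrow> j < K" by (auto simp: os_def others_set)
  have Fc: "F \<in> carrier_mat m N" using F by (simp add: trunc_unitary_def m_def)
  have Fhc: "Fh \<in> carrier_mat m N" and FhFh: "herm Fh * Fh = 1\<^sub>m N" using Fh by (auto simp: trunc_unitary_def m_def)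
  have Uc: "U \<in> carrier_mat N d" using U by (simp add: trunc_unitary_def)
  have Vc: "\<And>j. j < K \<Longrightarrow> V j \<in> carrier_mat M d" using V by (simp add: trunc_unitary_def)
  have Hc: "\<And>j. j < K \<Longrightarrow> H i j \<in> carrier_mat N M" using chan i by auto
  have Gc: "G \<in> carrier_mat N d" using Ci Fc Fhc Uc by (auto simp: G_def)
  have Xc: "X \<in> carrier_mat d N" using Gc by (simp add: X_def)
  have Hs_eq: "H_stack K N H i = hcat N (map (H i) os)" by (simp add: H_stack_def os_def)
  have Vm_eq: "Vm = diag_block_mat (map V os)" by (simp add: Vm_def V_minus_def os_def)
  have mapM: "map (\<lambda>j. dim_col (H i j)) os = map (\<lambda>_. M) os" 
  proof (rule map_cong[OF refl])
    fix j assume "j \<in> set os" hence "j < K" by (rule os_set)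
    thus "dim_col (H i j) = M" using Hc[of j] by auto
  qed
  have mapMr: "map (\<lambda>j. dim_row (V j)) os = map (\<lambda>_. M) os"
  proof (rule map_cong[OF refl])
    fix j assume "j \<in> set os" hence "j < K" by (rule os_set)
    thus "dim_row (V j) = M" using Vc[of j] by auto
  qed
  have mapd: "map (\<lambda>j. dim_col (V j)) os = map (\<lambda>_. d) os"
  proof (rule map_cong[OF refl])
    fix j assume "j \<in> set os" hence "j < K" by (rule os_set)
    thus "dim_col (V j) = d" using Vc[of j] by auto
  qed
  have Vmc: "Vm \<in> carrier_mat m ((K - 1) * d)"
  proof -
    have r: "dim_row Vm = sum_list (map (\<lambda>j. dim_row (V j)) os)"
      unfolding Vm_eq dim_diag_block_mat map_map o_def ..
    have c: "dim_col Vm = sum_list (map (\<lambda>j. dim_col (V j)) os)"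
      unfolding Vm_eq dim_diag_block_mat map_map o_def ..
    have "dim_row Vm = sum_list (map (\<lambda>_. M) os)" using r mapMr by (simp only:)
    also have "\<dots> = length os * M" by (simp add: sum_list_triv)
    finally have 1: "dim_row Vm = m" using len by (simp add: m_def)
    have "dim_col Vm = sum_list (map (\<lambda>_. d) os)" using c mapd by (simp only:)
    also have "\<dots> = length os * d" by (simp add: sum_list_triv)
    finally have 2: "dim_col Vm = (K - 1) * d" using len by simp
    show ?thesis using 1 2 by (rule carrier_matI)
  qed
  have terms: "\<And>j. j \<in> set os \<Longrightarrow> Re (trace_mat ((herm G * H i j * V j) * (complex_of_real (P / real d) \<cdot>\<^sub>m 1\<^sub>m d)
                   * herm (herm G * H i j * V j))) = (P / real d) * fsq (X * H i j * V j)"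
  proof -
    fix j assume j: "j \<in> set os"
    have "X * H i j * V j \<in> carrier_mat d d" using Xc Hc[OF os_set[OF j]] Vc[OF os_set[OF j]] by auto
    from trace_lemma[OF this, of "P / real d"] show "Re (trace_mat ((herm G * H i j * V j) * (complex_of_real (P / real d) \<cdot>\<^sub>m 1\<^sub>m d)
                   * herm (herm G * H i j * V j))) = (P / real d) * fsq (X * H i j * V j)" by (simp only: X_def)
  qed
  have "Re (leakage K d P H V G i) = (\<Sum>j\<in>set os. Re (trace_mat ((herm G * H i j * V j) * (complex_of_real (P / real d) \<cdot>\<^sub>m 1\<^sub>m d)
                   * herm (herm G * H i j * V j))))"
    unfolding leakage_def os_def[symmetric]
    by (simp add: sum_list_distinct_conv_sum_set os_def others_def Re_sum)
  also have "\<dots> = (P / real d) * (\<Sum>j\<in>set os. fsq (X * H i j * V j))"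
    using terms by (simp add: sum_distrib_left)
  also have "(\<Sum>j\<in>set os. fsq (X * H i j * V j)) = sum_list (map (\<lambda>j. fsq (X * H i j * V j)) os)"
    by (simp add: sum_list_distinct_conv_sum_set os_def others_def)
  also have "\<dots> = fsq (X * H_stack K N H i * Vm)"
  proof -
    have "X * H_stack K N H i = hcat d (map ((*) X) (map (H i) os))"
      unfolding Hs_eq using Xc Hc os_set by (intro mult_hcat) auto
    moreover have "fsq (hcat d (map ((*) X) (map (H i) os)) * diag_block_mat (map V os))
       = sum_list (map (\<lambda>(Y,V). fsq (Y * V)) (zip (map ((*) X) (map (H i) os)) (map V os)))"
    proof (intro fsq_hcat_diag)
      show "\<forall>k<length (map ((*) X) (map (H i) os)). map ((*) X) (map (H i) os) ! k \<in> carrier_mat d (dim_row (map V os ! k))"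
      proof (intro allI impI)
        fix k assume k: "k < length (map ((*) X) (map (H i) os))"
        hence jK: "os ! k < K" using os_set nth_mem by auto
        show "map ((*) X) (map (H i) os) ! k \<in> carrier_mat d (dim_row (map V os ! k))"
          using k Xc Hc[OF jK] Vc[OF jK] by auto
      qed
    qed simp
    ultimately show ?thesis by (simp add: Vm_eq zip_map_map o_def case_prod_unfold zip_same_conv_map)
  qed
  also have "X * H_stack K N H i * Vm = herm U * herm Fh * D * Vm"
    unfolding X_def G_def D_def
    by (rule core_identity[OF Fc Fhc FhFh Uc C Ci CCi Hs Vmc]) (use orth in \<open>simp add: Vm_def\<close>)
  finally have eq: "Re (leakage K d P H V G i) = P / real d * fsq (herm U * herm Fh * D * Vm)" .
  have bnd: "fsq (herm U * herm Fh * D * Vm) \<le> real d * real N * fsq D * real ((K - 1) * d)"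
  proof -
    have Dc: "D \<in> carrier_mat m m" using Fc Fhc by (auto simp: D_def)
    have a: "herm U \<in> carrier_mat d N" and b: "herm Fh \<in> carrier_mat N m" using Uc Fhc by auto
    have "fsq (herm U * herm Fh * D * Vm) \<le> fsq (herm U * herm Fh * D) * fsq Vm"
      using a b Dc Vmc by (intro fsq_mult[of _ d m _ "(K-1)*d"]) auto
    also have "fsq (herm U * herm Fh * D) \<le> fsq (herm U * herm Fh) * fsq D"
      using a b Dc by (intro fsq_mult[of _ d m _ m]) auto
    also have "fsq (herm U * herm Fh) \<le> fsq (herm U) * fsq (herm Fh)"
      using a b by (intro fsq_mult) 
    also have "fsq (herm U) = real d" using fsq_unitary[OF U] by simp
    also have "fsq (herm Fh) = real N" using fsq_unitary[OF Fh] by simp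
    also have "fsq Vm = real ((K - 1) * d)"
    proof -
      have "fsq Vm = sum_list (map (\<lambda>j. fsq (V j)) os)" by (simp add: Vm_eq fsq_diag_block o_def)
      also have "\<dots> = sum_list (map (\<lambda>_. real d) os)"
        using V os_set by (intro arg_cong[where f=sum_list] map_cong refl) (blast intro: fsq_unitary)
      finally show ?thesis using len by (simp add: sum_list_triv)
    qed
    finally show ?thesis
      by (simp add: mult_right_mono fsq_nonneg mult_mono)
  qed
  have main: "Re (leakage K d P H V G i) \<le> P / real d * (real d * real N * fsq D * real ((K - 1) * d))"
    unfolding eq using P bnd by (intro mult_left_mono) auto
  have fD: "fsq D = 2 * (chordal_dist Fh F)\<^sup>2"
    unfolding chordal_sq D_def using fsq_minus_swap[of "F * herm F" m m "Fh * herm Fh"] Fc Fhc by auto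
  show ?thesis
  proof (cases "d = 0")
    case True
    then show ?thesis using main by (simp add: G_def)
  next
    case False
    then show ?thesis using main fD by (simp add: G_def field_simps)
  qed
qed


lemma delta_bound:
  assumes NG: "N_G K M N > 0" and c: "c > 0" and P1: "P \<ge> 1"
    and Nf: "Nf = feedback_bits K M N P"
  shows "P * (Delta K M N c Nf)\<^sup>2 \<le> 4 / c powr (2 / real (N_G K M N))"
proof -
  define h where "h = real (N * ((K - 1) * M - N))"
  define g where "g = real (N_G K M N)"
  have gh: "g = 2 * h" unfolding g_def h_def N_G_def by simp
  have gpos: "g > 0" using NG by (simp add: g_def)
  have lP: "log 2 P \<ge> 0" using P1 by simp
  have h0: "h \<ge> 0" by (simp add: h_def)
  have x0: "h * log 2 P \<ge> 0" using h0 lP by simp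
  have "real Nf = real_of_int \<lceil>h * log 2 P\<rceil>"
    unfolding Nf feedback_bits_def h_def[symmetric] using x0 by simp
  hence "real Nf \<ge> h * log 2 P" by simp
  hence e: "real Nf * 2 / g \<ge> log 2 P" using gh gpos by (simp add: field_simps)
  define q where "q = (c * 2 ^ Nf) powr (1 / g)"
  have cpos: "c * 2 ^ Nf > 0" using c by simp
  have qpos: "q > 0" using cpos c by (simp add: q_def)
  have "q\<^sup>2 = (c * 2 ^ Nf) powr (2 / g)"
    unfolding q_def using cpos by (simp add: powr_powr[symmetric] power2_eq_square powr_add[symmetric])
  also have "\<dots> = c powr (2 / g) * (2 ^ Nf) powr (2 / g)"
    using c by (simp add: powr_mult)
  also have "(2 ^ Nf) powr (2 / g) = (2::real) powr (real Nf * 2 / g)"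
    by (simp add: powr_realpow[symmetric] powr_powr)
  finally have q2: "q\<^sup>2 = c powr (2 / g) * 2 powr (real Nf * 2 / g)" .
  have "2 powr (real Nf * 2 / g) \<ge> 2 powr (log 2 P)"
    using e by (intro powr_mono) auto
  hence P2: "2 powr (real Nf * 2 / g) \<ge> P" using P1 by simp
  have cg: "c powr (2 / g) > 0" using c by simp
  have "P * (Delta K M N c Nf)\<^sup>2 = 4 * P / q\<^sup>2"
    unfolding Delta_def q_def g_def by (simp add: power_divide)
  also have "\<dots> \<le> 4 * P / (c powr (2 / g) * P)"
    unfolding q2 using P2 cg P1 by (intro divide_left_mono mult_left_mono) auto
  also have "\<dots> = 4 / c powr (2 / g)" using P1 by simp
  finally show ?thesis by (simp add: g_def)
qed




lemma nf_ge:
  assumes NG: "N_G K M N > 0" and P: "P \<ge> 2 ^ n0" "P \<ge> 1"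
  shows "feedback_bits K M N P \<ge> n0"
proof -
  define h where "h = real (N * ((K - 1) * M - N))"
  have "2 * (N * ((K - 1) * M - N)) > 0" using NG by (simp only: N_G_def mult.assoc)
  hence "1 \<le> N * ((K - 1) * M - N)" by linarith
  hence h1: "h \<ge> 1" unfolding h_def by (metis of_nat_1 of_nat_le_iff)
  have lP: "log 2 P \<ge> real n0"
  proof -
    have "log 2 (2 ^ n0) \<le> log 2 P" using P by (subst log_le_cancel_iff) auto
    thus ?thesis by (simp add: log_nat_power)
  qed
  have x0: "h * log 2 P \<ge> real n0"
  proof -
    have "0 \<le> log 2 P" using lP of_nat_0_le_iff order_trans by blast
    hence "1 * log 2 P \<le> h * log 2 P" using h1 by (intro mult_right_mono) auto
    thus ?thesis using lP by simp
  qed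
  have "real (feedback_bits K M N P) = real_of_int \<lceil>h * log 2 P\<rceil>"
    unfolding feedback_bits_def h_def[symmetric] using x0 by simp
  hence "real (feedback_bits K M N P) \<ge> real n0" using x0 le_of_int_ceiling[of "h * log 2 P"] by linarith
  thus ?thesis by simp
qed

lemma frob_zero: "frob_norm (0\<^sub>m a b) = 0"
  by (simp add: frob_norm_def)

lemma chord_zero:
  assumes F: "trunc_unitary F m N" and Fh: "trunc_unitary Fh m N" and NG: "N_G K M N = 0"
    and m: "m = (K - 1) * M" and dims: "(K - 1) * M \<ge> N"
  shows "chordal_dist Fh F = 0"
proof -
  have Fc: "F \<in> carrier_mat m N" and Fhc: "Fh \<in> carrier_mat m N"
    using F Fh by (auto simp: trunc_unitary_def)
  have "F * herm F = Fh * herm Fh"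
  proof (cases "N = 0")
    case True
    then show ?thesis using Fc Fhc by (intro eq_matI) (auto simp: scalar_prod_def)
  next
    case False
    hence mN: "m = N" using NG dims m by (simp add: N_G_def)
    have "F * herm F = 1\<^sub>m N"
      using F mN by (intro mat_mult_left_right_inverse[of "herm F"]) (auto simp: trunc_unitary_def)
    moreover have "Fh * herm Fh = 1\<^sub>m N"
      using Fh mN by (intro mat_mult_left_right_inverse[of "herm Fh"]) (auto simp: trunc_unitary_def)
    ultimately show ?thesis by simp
  qed
  moreover have "Fh * herm Fh \<in> carrier_mat m m" using Fhc by auto
  ultimately show ?thesis unfolding chordal_dist_def using frob_zero by simp
qed

theorem corollary1:
  fixes K M N d :: nat and c :: real
    and H :: "nat \<Rightarrow> nat \<Rightarrow> complex mat"
    and S :: "nat \<Rightarrow> complex mat set"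
    and eps :: "nat \<Rightarrow> real"
  assumes dims: "(K - 1) * M \<ge> N"
    and chan: "\<forall>i<K. \<forall>j<K. H i j \<in> carrier_mat N M"
    and c_pos: "c > 0"
    and codebook: "\<forall>Nf. finite (S Nf) \<and> card (S Nf) = 2 ^ Nf
        \<and> (\<forall>X\<in>S Nf. trunc_unitary X ((K - 1) * M) N)
        \<and> (\<forall>F. trunc_unitary F ((K - 1) * M) N \<longrightarrow>
              (\<exists>X\<in>S Nf. chordal_dist X F \<le> Delta K M N c Nf * (1 + eps Nf)))"
    and eps_small: "eps \<in> o(\<lambda>Nf. 2 powr (- (real Nf / real (N_G K M N))))"
  shows "\<forall>i<K. \<exists>B::real. \<forall>\<^sub>F P in at_top.
     \<forall>F C Cinv Fh V U. 
       (let Nf = feedback_bits K M N P in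
         trunc_unitary F ((K - 1) * M) N
         \<and> C \<in> carrier_mat N N \<and> Cinv \<in> carrier_mat N N
         \<and> C * Cinv = 1\<^sub>m N \<and> Cinv * C = 1\<^sub>m N
         \<and> herm (H_stack K N H i) = F * C
         \<and> Fh \<in> S Nf \<and> (\<forall>X\<in>S Nf. chordal_dist Fh F \<le> chordal_dist X F)
         \<and> (\<forall>j<K. trunc_unitary (V j) M d)
         \<and> trunc_unitary U N d
         \<and> herm U * herm Fh * V_minus K V i = 0\<^sub>m d ((K - 1) * d))
       \<longrightarrow> Re (leakage K d P H V (Cinv * herm F * Fh * U) i) \<le> B"
proof (intro allI impI)
  fix i assume i: "i < K"
  define NG where "NG = N_G K M N"
  have key: "\<And>P F C Cinv Fh V U. P \<ge> 0 \<Longrightarrow>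
      (let Nf = feedback_bits K M N P in
         trunc_unitary F ((K - 1) * M) N
         \<and> C \<in> carrier_mat N N \<and> Cinv \<in> carrier_mat N N
         \<and> C * Cinv = 1\<^sub>m N \<and> Cinv * C = 1\<^sub>m N
         \<and> herm (H_stack K N H i) = F * C
         \<and> Fh \<in> S Nf \<and> (\<forall>X\<in>S Nf. chordal_dist Fh F \<le> chordal_dist X F)
         \<and> (\<forall>j<K. trunc_unitary (V j) M d)
         \<and> trunc_unitary U N d
         \<and> herm U * herm Fh * V_minus K V i = 0\<^sub>m d ((K - 1) * d)) \<Longrightarrow>
      Re (leakage K d P H V (Cinv * herm F * Fh * U) i)
        \<le> 2 * real N * real (K - 1) * real d * (P * (chordal_dist Fh F)\<^sup>2)
      \<and> trunc_unitary F ((K - 1) * M) N \<and> trunc_unitary Fh ((K - 1) * M) N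
      \<and> chordal_dist Fh F \<le> Delta K M N c (feedback_bits K M N P) * (1 + eps (feedback_bits K M N P))"
  proof -
    fix P F C Cinv Fh V U
    assume P: "P \<ge> (0::real)"
    define Nf where "Nf = feedback_bits K M N P"
    assume H: "let Nf = feedback_bits K M N P in
         trunc_unitary F ((K - 1) * M) N
         \<and> C \<in> carrier_mat N N \<and> Cinv \<in> carrier_mat N N
         \<and> C * Cinv = 1\<^sub>m N \<and> Cinv * C = 1\<^sub>m N
         \<and> herm (H_stack K N H i) = F * C
         \<and> Fh \<in> S Nf \<and> (\<forall>X\<in>S Nf. chordal_dist Fh F \<le> chordal_dist X F)
         \<and> (\<forall>j<K. trunc_unitary (V j) M d)
         \<and> trunc_unitary U N d
         \<and> herm U * herm Fh * V_minus K V i = 0\<^sub>m d ((K - 1) * d)"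
    hence F: "trunc_unitary F ((K - 1) * M) N"
      and C: "C \<in> carrier_mat N N" and Ci: "Cinv \<in> carrier_mat N N" and CCi: "C * Cinv = 1\<^sub>m N"
      and Hs: "herm (H_stack K N H i) = F * C"
      and FhS: "Fh \<in> S Nf" and mini: "\<forall>X\<in>S Nf. chordal_dist Fh F \<le> chordal_dist X F"
      and V: "\<forall>j<K. trunc_unitary (V j) M d" and U: "trunc_unitary U N d"
      and orth: "herm U * herm Fh * V_minus K V i = 0\<^sub>m d ((K - 1) * d)"
      unfolding Let_def Nf_def by auto
    have Fh: "trunc_unitary Fh ((K - 1) * M) N" using codebook FhS by blast
    obtain X where "X \<in> S Nf" "chordal_dist X F \<le> Delta K M N c Nf * (1 + eps Nf)"
      using codebook F by blast
    hence cd: "chordal_dist Fh F \<le> Delta K M N c Nf * (1 + eps Nf)" using mini by force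
    show "Re (leakage K d P H V (Cinv * herm F * Fh * U) i)
        \<le> 2 * real N * real (K - 1) * real d * (P * (chordal_dist Fh F)\<^sup>2)
      \<and> trunc_unitary F ((K - 1) * M) N \<and> trunc_unitary Fh ((K - 1) * M) N
      \<and> chordal_dist Fh F \<le> Delta K M N c (feedback_bits K M N P) * (1 + eps (feedback_bits K M N P))"
      using leak_bound[OF i chan F C Ci CCi Hs Fh V U orth P] F Fh cd by (simp add: Nf_def)
  qed
  show "\<exists>B. \<forall>\<^sub>F P in at_top. \<forall>F C Cinv Fh V U.
       (let Nf = feedback_bits K M N P in
         trunc_unitary F ((K - 1) * M) N
         \<and> C \<in> carrier_mat N N \<and> Cinv \<in> carrier_mat N N
         \<and> C * Cinv = 1\<^sub>m N \<and> Cinv * C = 1\<^sub>m N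
         \<and> herm (H_stack K N H i) = F * C
         \<and> Fh \<in> S Nf \<and> (\<forall>X\<in>S Nf. chordal_dist Fh F \<le> chordal_dist X F)
         \<and> (\<forall>j<K. trunc_unitary (V j) M d)
         \<and> trunc_unitary U N d
         \<and> herm U * herm Fh * V_minus K V i = 0\<^sub>m d ((K - 1) * d))
       \<longrightarrow> Re (leakage K d P H V (Cinv * herm F * Fh * U) i) \<le> B"
  proof (cases "NG = 0")
    case True
    show ?thesis
    proof (rule exI[of _ 0], rule eventually_mono[OF eventually_ge_at_top[of "0::real"]], intro allI impI)
      fix P :: real and F C Cinv Fh V U
      assume P: "P \<ge> 0" and H: "let Nf = feedback_bits K M N P in
         trunc_unitary F ((K - 1) * M) N
         \<and> C \<in> carrier_mat N N \<and> Cinv \<in> carrier_mat N N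
         \<and> C * Cinv = 1\<^sub>m N \<and> Cinv * C = 1\<^sub>m N
         \<and> herm (H_stack K N H i) = F * C
         \<and> Fh \<in> S Nf \<and> (\<forall>X\<in>S Nf. chordal_dist Fh F \<le> chordal_dist X F)
         \<and> (\<forall>j<K. trunc_unitary (V j) M d)
         \<and> trunc_unitary U N d
         \<and> herm U * herm Fh * V_minus K V i = 0\<^sub>m d ((K - 1) * d)"
      note k = key[OF P H]
      have "chordal_dist Fh F = 0"
        using k True dims by (intro chord_zero[of F "(K - 1) * M" N Fh K M]) (auto simp: NG_def)
      thus "Re (leakage K d P H V (Cinv * herm F * Fh * U) i) \<le> 0" using k by simp
    qed
  next
    case False
    hence NGp: "N_G K M N > 0" by (simp add: NG_def)
    have "\<forall>\<^sub>F n in at_top. norm (eps n) \<le> 1 * norm (2 powr (- (real n / real (N_G K M N))))"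
      by (rule landau_o.smallD[OF eps_small]) simp
    then obtain n0 where n0: "\<And>n. n \<ge> n0 \<Longrightarrow> norm (eps n) \<le> 1 * norm ((2::real) powr (- (real n / real (N_G K M N))))"
      unfolding eventually_at_top_linorder by blast
    have eps1: "\<And>n. n \<ge> n0 \<Longrightarrow> \<bar>eps n\<bar> \<le> 1"
    proof -
      fix n assume "n \<ge> n0"
      from n0[OF this] have "\<bar>eps n\<bar> \<le> (2::real) powr (- (real n / real (N_G K M N)))" by simp
      also have "\<dots> \<le> 2 powr 0" by (intro powr_mono) auto
      finally show "\<bar>eps n\<bar> \<le> 1" by simp
    qed
    define cst where "cst = 16 / c powr (2 / real (N_G K M N))"
    show ?thesis
    proof (rule exI[of _ "2 * real N * real (K - 1) * real d * cst"],
        rule eventually_mono[OF eventually_ge_at_top[of "max 1 (2 ^ n0) :: real"]], intro allI impI)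
      fix P :: real and F C Cinv Fh V U
      assume Pm: "P \<ge> max 1 (2 ^ n0)" and H: "let Nf = feedback_bits K M N P in
         trunc_unitary F ((K - 1) * M) N
         \<and> C \<in> carrier_mat N N \<and> Cinv \<in> carrier_mat N N
         \<and> C * Cinv = 1\<^sub>m N \<and> Cinv * C = 1\<^sub>m N
         \<and> herm (H_stack K N H i) = F * C
         \<and> Fh \<in> S Nf \<and> (\<forall>X\<in>S Nf. chordal_dist Fh F \<le> chordal_dist X F)
         \<and> (\<forall>j<K. trunc_unitary (V j) M d)
         \<and> trunc_unitary U N d
         \<and> herm U * herm Fh * V_minus K V i = 0\<^sub>m d ((K - 1) * d)"
      have P1: "P \<ge> 1" and P2: "P \<ge> 2 ^ n0" using Pm max.bounded_iff by blast+
      have P0: "P \<ge> 0" using P1 by simp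
      note k = key[OF P0 H]
      define Nf where "Nf = feedback_bits K M N P"
      have Nfn0: "Nf \<ge> n0" unfolding Nf_def by (rule nf_ge[OF NGp P2 P1])
      have e: "\<bar>1 + eps Nf\<bar> \<le> 2" using eps1[OF Nfn0] by linarith
      define x where "x = chordal_dist Fh F"
      have x0: "x \<ge> 0" unfolding x_def chordal_dist_def frob_norm_def fsq_def[symmetric] using fsq_nonneg by simp
      have xb: "x \<le> Delta K M N c Nf * (1 + eps Nf)" using k by (simp add: x_def Nf_def)
      have "x\<^sup>2 \<le> (Delta K M N c Nf * (1 + eps Nf))\<^sup>2"
        using x0 xb by (intro power_mono) auto
      also have "\<dots> = (Delta K M N c Nf)\<^sup>2 * (1 + eps Nf)\<^sup>2" by (simp add: power_mult_distrib)
      also have "\<dots> \<le> (Delta K M N c Nf)\<^sup>2 * 4"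
      proof (intro mult_left_mono)
        have "(1 + eps Nf)\<^sup>2 = \<bar>1 + eps Nf\<bar>\<^sup>2" by simp
        also have "\<dots> \<le> 2\<^sup>2" using e by (intro power_mono) auto
        finally show "(1 + eps Nf)\<^sup>2 \<le> 4" by simp
      qed simp
      finally have "P * x\<^sup>2 \<le> P * ((Delta K M N c Nf)\<^sup>2 * 4)" using P0 by (intro mult_left_mono) auto
      also have "\<dots> = 4 * (P * (Delta K M N c Nf)\<^sup>2)" by simp
      also have "\<dots> \<le> 4 * (4 / c powr (2 / real (N_G K M N)))"
        using delta_bound[OF NGp c_pos P1 Nf_def] by simp
      also have "\<dots> = cst" by (simp add: cst_def)
      finally have Px: "P * x\<^sup>2 \<le> cst" .
      have "Re (leakage K d P H V (Cinv * herm F * Fh * U) i) \<le> 2 * real N * real (K - 1) * real d * (P * x\<^sup>2)"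
        using k by (simp add: x_def)
      also have "\<dots> \<le> 2 * real N * real (K - 1) * real d * cst"
        using Px by (intro mult_left_mono) auto
      finally show "Re (leakage K d P H V (Cinv * herm F * Fh * U) i) \<le> 2 * real N * real (K - 1) * real d * cst" .
    qed
  qed
qed


end
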